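(* Let $\alpha>1$, $\beta\ge0$, and suppose the Fourier coefficients of $V$ satisfy $|v_k(0)|\le c_v e^{-\beta|k|}\langle k\rangle^{-\alpha}$ for all $k\in\mathbb{Z}$ (e.g. $V\in C^{\alpha,\beta,1}$). Then for all $j,k\in\mathbb{Z}$ $$|G_{jk}|\le \frac{3c_v e^{-\beta|j-k|}}{(\langle j\rangle+\langle k\rangle)\langle j-k\rangle^{\alpha}},$$ and for every $n\ge2$ $$|(G^n)_{jk}|\le \frac{(3c_v)^n c_\alpha^{\,n-1}e^{-\beta|j-k|}}{\langle j\rangle\langle k\rangle\langle j-k\rangle^{\alpha}}.$$
   Context: $V(x,t)=\sum_{k\in\mathbb{Z}}v_k(t)e^{ikx}$ is real-valued with $v_0\equiv0$; $\langle k\rangle=|k|+1$. $G$ is the infinite matrix (operator on $l^2(\mathbb{Z})$) with $G_{jk}=0$ if $j^2=k^2$ and $G_{jk}=\frac{v_{j-k}(0)}{j^2-k^2}$ if $j^2\ne k^2$. For $\nu>1$, $c_\nu$ denotes a constant depending only on $\nu$ such that for all $\beta\ge0$ and $s,m\in\mathbb{Z}$: $\sum_{k\in\mathbb{Z}}\frac{e^{-\beta|s-k|-\beta|k-m|}}{\langle s-k\rangle^\nu\langle k-m\rangle^\nu}\le\frac{c_\nu e^{-\beta|s-m|}}{\langle s-m\rangle^\nu}$. *)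

theory Defs
  imports "HOL-Analysis.Analysis"
begin

definition jbr :: "int \<Rightarrow> real" where
  "jbr k = real_of_int \<bar>k\<bar> + 1"

definition Gmat :: "(int \<Rightarrow> complex) \<Rightarrow> int \<Rightarrow> int \<Rightarrow> complex" where
  "Gmat v j k = (if j^2 = k^2 then 0 else v (j - k) / of_int (j^2 - k^2))"

fun Gpow :: "(int \<Rightarrow> int \<Rightarrow> complex) \<Rightarrow> nat \<Rightarrow> int \<Rightarrow> int \<Rightarrow> complex" where
  "Gpow G 0 j k = (if j = k then 1 else 0)"
| "Gpow G (Suc n) j k = infsum (\<lambda>m. Gpow G n j m * G m k) UNIV"

end

theory Submission
  imports Defs
begin

lemma nat_summ:
  fixes \<alpha> :: real assumes "\<alpha> > 1"
  shows "(\<lambda>n::nat. 1 / (real n + 1) powr \<alpha>) summable_on UNIV"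
proof -
  have "summable (\<lambda>n::nat. real n powr (-\<alpha>))"
    using assms by (subst summable_real_powr_iff) auto
  hence "summable (\<lambda>n::nat. real (Suc n) powr (-\<alpha>))"
    by (subst summable_Suc_iff)
  hence "summable (\<lambda>n::nat. 1 / (real n + 1) powr \<alpha>)"
    by (simp add: powr_minus_divide add.commute)
  thus ?thesis
    by (subst summable_on_UNIV_nonneg_real_iff) auto
qed

lemma int_summ:
  fixes \<alpha> :: real assumes "\<alpha> > 1"
  shows "(\<lambda>m::int. 1 / jbr m powr \<alpha>) summable_on UNIV"
proof -
  let ?f = "\<lambda>m::int. 1 / jbr m powr \<alpha>"
  have U: "(UNIV::int set) = range int \<union> range (\<lambda>n. - int n - 1)"
  proof -
    have "x \<in> range int \<union> range (\<lambda>n. - int n - 1)" for x :: int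
    proof (cases "x \<ge> 0")
      case True thus ?thesis by (metis UnI1 nonneg_int_cases rangeI)
    next
      case False
      hence "x = - int (nat (- x - 1)) - 1" by simp
      thus ?thesis by blast
    qed
    thus ?thesis by blast
  qed
  have s1: "?f summable_on range int"
  proof (subst summable_on_reindex)
    show "inj_on int UNIV" by simp
    have "(?f \<circ> int) = (\<lambda>n::nat. 1 / (real n + 1) powr \<alpha>)"
      by (auto simp: jbr_def)
    thus "(?f \<circ> int) summable_on UNIV" using nat_summ[OF assms] by simp
  qed
  have s2: "?f summable_on range (\<lambda>n. - int n - 1)"
  proof (subst summable_on_reindex)
    show "inj_on (\<lambda>n. - int n - 1) UNIV" by (auto simp: inj_on_def)
    show "(?f \<circ> (\<lambda>n. - int n - 1)) summable_on UNIV"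
    proof (rule summable_on_comparison_test[OF nat_summ[OF assms]])
      fix n :: nat
      have e: "jbr (- int n - 1) = real n + 2" by (simp add: jbr_def)
      show "(?f \<circ> (\<lambda>n. - int n - 1)) n \<le> 1 / (real n + 1) powr \<alpha>"
        unfolding o_def e using assms
        by (intro divide_left_mono powr_mono2) auto
      show "0 \<le> (?f \<circ> (\<lambda>n. - int n - 1)) n" by simp
    qed
  qed
  have "?f summable_on (range int \<union> range (\<lambda>n. - int n - 1))"
    by (rule summable_on_Un_disjoint[OF s1 s2]) auto
  thus ?thesis using U by simp
qed

lemma int_summ_shift:
  fixes \<alpha> :: real assumes "\<alpha> > 1"
  shows "(\<lambda>m::int. 1 / jbr (j - m) powr \<alpha>) summable_on UNIV"
proof -
  have b: "bij_betw (\<lambda>m::int. j - m) UNIV UNIV"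
    by (rule bij_betwI[where g="\<lambda>m. j - m"]) auto
  show ?thesis using summable_on_reindex_bij_betw[OF b, of "\<lambda>m. 1 / jbr m powr \<alpha>"] int_summ[OF assms]
    by simp
qed

lemma jbr_pos: "jbr k > 0" and jbr_ge1: "jbr k \<ge> 1"
  by (auto simp: jbr_def)

lemma G_bound:
  fixes v :: "int \<Rightarrow> complex" and \<alpha> \<beta> cv :: real
  assumes "\<forall>k. norm (v k) \<le> cv * exp (- \<beta> * real_of_int \<bar>k\<bar>) / jbr k powr \<alpha>"
  shows "norm (Gmat v j k) \<le> 3 * cv * exp (- \<beta> * real_of_int \<bar>j - k\<bar>) / ((jbr j + jbr k) * jbr (j - k) powr \<alpha>)"
proof -
  have cv: "cv \<ge> 0" using assms[rule_format, of 0] by (simp add: jbr_def) (meson norm_ge_zero order_trans)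
  show ?thesis
  proof (cases "j^2 = k^2")
    case True
    thus ?thesis using cv jbr_pos[of j] jbr_pos[of k] jbr_pos[of "j-k"]
      by (auto simp: Gmat_def intro!: divide_nonneg_pos mult_pos_pos)
  next
    case False
    let ?E = "cv * exp (- \<beta> * real_of_int \<bar>j - k\<bar>) / jbr (j - k) powr \<alpha>"
    have E0: "?E \<ge> 0" using cv jbr_pos[of "j-k"] by simp
    have "j \<noteq> k" "j \<noteq> - k" using False by auto
    hence a: "\<bar>j - k\<bar> \<ge> 1" "\<bar>j + k\<bar> \<ge> 1" by auto
    have "\<bar>j\<bar> + \<bar>k\<bar> = max \<bar>j - k\<bar> \<bar>j + k\<bar>" by auto
    moreover have "\<bar>j - k\<bar> \<le> \<bar>j - k\<bar> * \<bar>j + k\<bar>"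
      using a mult_left_mono[of 1 "\<bar>j + k\<bar>" "\<bar>j - k\<bar>"] by simp
    moreover have "\<bar>j + k\<bar> \<le> \<bar>j - k\<bar> * \<bar>j + k\<bar>"
      using a mult_right_mono[of 1 "\<bar>j - k\<bar>" "\<bar>j + k\<bar>"] by simp
    ultimately have mx: "\<bar>j\<bar> + \<bar>k\<bar> \<le> \<bar>j - k\<bar> * \<bar>j + k\<bar>" by linarith
    have p1: "\<bar>j - k\<bar> * \<bar>j + k\<bar> \<ge> 1" using a mult_left_mono[of 1 "\<bar>j + k\<bar>" "\<bar>j - k\<bar>"] by simp 
    have eq: "\<bar>j^2 - k^2\<bar> = \<bar>j - k\<bar> * \<bar>j + k\<bar>"
      by (simp add: power2_eq_square abs_mult[symmetric] algebra_simps)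
    have key: "jbr j + jbr k \<le> 3 * real_of_int \<bar>j^2 - k^2\<bar>"
    proof -
      have "real_of_int (\<bar>j\<bar> + \<bar>k\<bar> + 2) \<le> real_of_int (3 * (\<bar>j - k\<bar> * \<bar>j + k\<bar>))"
        using mx p1 by linarith
      thus ?thesis unfolding eq jbr_def by simp
    qed
    have "\<bar>j^2 - k^2\<bar> > 0" using False by simp
    hence pos: "real_of_int \<bar>j^2 - k^2\<bar> > 0" by (simp only: of_int_0_less_iff)
    have "norm (Gmat v j k) = norm (v (j - k)) / real_of_int \<bar>j^2 - k^2\<bar>"
      using False unfolding Gmat_def
      by (simp only: if_False norm_divide norm_of_int)
    also have "\<dots> \<le> ?E / real_of_int \<bar>j^2 - k^2\<bar>"
      using assms[rule_format, of "j-k"] pos by (intro divide_right_mono) auto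
    also have "\<dots> \<le> ?E / ((jbr j + jbr k) / 3)"
      using key pos E0 jbr_pos[of j] jbr_pos[of k]
      by (intro divide_left_mono) auto
    also have "\<dots> = 3 * cv * exp (- \<beta> * real_of_int \<bar>j - k\<bar>) / ((jbr j + jbr k) * jbr (j - k) powr \<alpha>)"
      by (simp add: field_simps)
    finally show ?thesis .
  qed
qed


lemma step_lemma:
  fixes v :: "int \<Rightarrow> complex" and \<alpha> \<beta> cv c K :: real and A :: "int \<Rightarrow> int \<Rightarrow> complex"
  assumes al: "\<alpha> > 1" and K0: "K \<ge> 0"
    and vb: "\<forall>k. norm (v k) \<le> cv * exp (- \<beta> * real_of_int \<bar>k\<bar>) / jbr k powr \<alpha>"
    and ch: "\<forall>b\<ge>0. \<forall>s m::int.
           infsum (\<lambda>k. exp (- b * real_of_int \<bar>s - k\<bar> - b * real_of_int \<bar>k - m\<bar>)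
                        / (jbr (s - k) powr \<alpha> * jbr (k - m) powr \<alpha>)) UNIV
           \<le> c * exp (- b * real_of_int \<bar>s - m\<bar>) / jbr (s - m) powr \<alpha>"
    and b0: "\<beta> \<ge> 0"
    and Ab: "\<And>j m. norm (A j m) \<le> K * exp (- \<beta> * real_of_int \<bar>j - m\<bar>) / (jbr j * jbr (j - m) powr \<alpha>)"
  shows "norm (infsum (\<lambda>m. A j m * Gmat v m k) UNIV)
    \<le> K * (3 * cv) * c * exp (- \<beta> * real_of_int \<bar>j - k\<bar>) / (jbr j * jbr k * jbr (j - k) powr \<alpha>)"
proof -
  have cv: "cv \<ge> 0" using vb[rule_format, of 0] by (simp add: jbr_def) (meson norm_ge_zero order_trans)
  define h where "h m = exp (- \<beta> * real_of_int \<bar>j - m\<bar> - \<beta> * real_of_int \<bar>m - k\<bar>)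
                        / (jbr (j - m) powr \<alpha> * jbr (m - k) powr \<alpha>)" for m
  define C where "C = K * (3 * cv) / (jbr j * jbr k)"
  have C0: "C \<ge> 0" unfolding C_def using K0 cv jbr_pos[of j] jbr_pos[of k] by simp
  have hs: "h summable_on UNIV"
  proof (rule summable_on_comparison_test[OF int_summ_shift[OF al, of j]])
    fix m
    have e: "exp (- \<beta> * real_of_int \<bar>j - m\<bar> - \<beta> * real_of_int \<bar>m - k\<bar>) \<le> 1"
    proof -
      have "\<beta> * real_of_int \<bar>j - m\<bar> \<ge> 0" "\<beta> * real_of_int \<bar>m - k\<bar> \<ge> 0" using b0 by simp_all
      thus ?thesis by simp
    qed
    have p: "jbr (m - k) powr \<alpha> \<ge> 1" using jbr_ge1[of "m-k"] al by (simp add: ge_one_powr_ge_zero)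
    have "h m \<le> 1 / (jbr (j - m) powr \<alpha> * jbr (m - k) powr \<alpha>)"
      unfolding h_def using e jbr_pos[of "j-m"] jbr_pos[of "m-k"]
      by (intro divide_right_mono) auto
    also have "\<dots> \<le> 1 / (jbr (j - m) powr \<alpha>)"
      using p jbr_pos[of "j-m"] by (intro divide_left_mono) (auto simp: mult_le_cancel_left1 intro!: mult_pos_pos)
    finally show "h m \<le> 1 / jbr (j - m) powr \<alpha>" .
    show "0 \<le> h m" unfolding h_def by simp
  qed
  have ws: "(\<lambda>m. C * h m) summable_on UNIV" by (rule summable_on_cmult_right[OF hs])
  have pt: "norm (A j m * Gmat v m k) \<le> C * h m" for m
  proof -
    let ?a = "K * exp (- \<beta> * real_of_int \<bar>j - m\<bar>) / (jbr j * jbr (j - m) powr \<alpha>)"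
    have a0: "?a \<ge> 0" using K0 jbr_pos[of j] jbr_pos[of "j-m"] by simp
    have g1: "norm (Gmat v m k) \<le> 3 * cv * exp (- \<beta> * real_of_int \<bar>m - k\<bar>) / ((jbr m + jbr k) * jbr (m - k) powr \<alpha>)"
      by (rule G_bound[OF vb])
    also have "\<dots> \<le> 3 * cv * exp (- \<beta> * real_of_int \<bar>m - k\<bar>) / (jbr k * jbr (m - k) powr \<alpha>)"
      using cv jbr_pos[of m] jbr_pos[of k] jbr_pos[of "m-k"]
      by (intro divide_left_mono mult_right_mono mult_pos_pos) auto
    finally have g2: "norm (Gmat v m k) \<le> 3 * cv * exp (- \<beta> * real_of_int \<bar>m - k\<bar>) / (jbr k * jbr (m - k) powr \<alpha>)" .
    have "norm (A j m * Gmat v m k) = norm (A j m) * norm (Gmat v m k)" by (simp add: norm_mult)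
    also have "\<dots> \<le> ?a * (3 * cv * exp (- \<beta> * real_of_int \<bar>m - k\<bar>) / (jbr k * jbr (m - k) powr \<alpha>))"
      using Ab[of j m] g2 a0 by (intro mult_mono) auto
    also have "\<dots> = C * h m"
      unfolding C_def h_def using jbr_pos[of j] jbr_pos[of k] jbr_pos[of "j-m"] jbr_pos[of "m-k"]
      by (simp add: field_simps exp_diff exp_minus)
    finally show ?thesis .
  qed
  have fs: "(\<lambda>m. A j m * Gmat v m k) summable_on UNIV"
  proof (rule abs_summable_summable, rule Infinite_Sum.abs_summable_on_comparison_test[where g="\<lambda>m. C * h m"])
    show "(\<lambda>m. norm (C * h m)) summable_on UNIV" by (rule summable_on_iff_abs_summable_on_real[THEN iffD1, OF ws])
    show "norm (A j m * Gmat v m k) \<le> norm (C * h m)" for m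
      by (rule order_trans[OF pt[of m]]) simp
  qed
  have "norm (infsum (\<lambda>m. A j m * Gmat v m k) UNIV) \<le> infsum (\<lambda>m. C * h m) UNIV"
    by (rule norm_infsum_le[OF has_sum_infsum[OF fs] has_sum_infsum[OF ws]]) (use pt in auto)
  also have "\<dots> = C * infsum h UNIV" by (rule infsum_cmult_right') 
  also have "\<dots> \<le> C * (c * exp (- \<beta> * real_of_int \<bar>j - k\<bar>) / jbr (j - k) powr \<alpha>)"
    using ch[rule_format, OF b0, of j k] C0 unfolding h_def by (intro mult_left_mono) auto
  also have "\<dots> = K * (3 * cv) * c * exp (- \<beta> * real_of_int \<bar>j - k\<bar>) / (jbr j * jbr k * jbr (j - k) powr \<alpha>)"
    unfolding C_def by simp
  finally show ?thesis .
qed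

lemma Gpow1: "Gpow G (Suc 0) j k = G j k"
proof -
  have "Gpow G (Suc 0) j k = infsum (\<lambda>m. (if j = m then 1 else 0) * G m k) UNIV" by simp
  also have "\<dots> = infsum (\<lambda>m. G m k) {j}"
    by (rule infsum_cong_neutral) auto
  finally show ?thesis by simp
qed

theorem mainTheorem4:
  fixes v :: "int \<Rightarrow> complex" and \<alpha> \<beta> cv c :: real
  assumes "\<alpha> > 1" and "\<beta> \<ge> 0"
    and "v 0 = 0"
    and "\<forall>k. v (- k) = cnj (v k)"
    and "\<forall>k. norm (v k) \<le> cv * exp (- \<beta> * real_of_int \<bar>k\<bar>) / jbr k powr \<alpha>"
    and "\<forall>b\<ge>0. \<forall>s m::int.
           infsum (\<lambda>k. exp (- b * real_of_int \<bar>s - k\<bar> - b * real_of_int \<bar>k - m\<bar>)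
                        / (jbr (s - k) powr \<alpha> * jbr (k - m) powr \<alpha>)) UNIV
           \<le> c * exp (- b * real_of_int \<bar>s - m\<bar>) / jbr (s - m) powr \<alpha>"
  shows "(\<forall>j k. norm (Gmat v j k)
            \<le> 3 * cv * exp (- \<beta> * real_of_int \<bar>j - k\<bar>) / ((jbr j + jbr k) * jbr (j - k) powr \<alpha>))
       \<and> (\<forall>n\<ge>2. \<forall>j k. norm (Gpow (Gmat v) n j k)
            \<le> (3 * cv) ^ n * c ^ (n - 1) * exp (- \<beta> * real_of_int \<bar>j - k\<bar>)
               / (jbr j * jbr k * jbr (j - k) powr \<alpha>))"
proof
  note al = assms(1) and b0 = assms(2) and vb = assms(5) and ch = assms(6)
  show G1: "\<forall>j k. norm (Gmat v j k)
            \<le> 3 * cv * exp (- \<beta> * real_of_int \<bar>j - k\<bar>) / ((jbr j + jbr k) * jbr (j - k) powr \<alpha>)"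
    using G_bound[OF vb] by blast
  have cv: "cv \<ge> 0" using vb[rule_format, of 0] by (simp add: jbr_def) (meson norm_ge_zero order_trans)
  have c0: "c \<ge> 0"
  proof -
    have "0 \<le> infsum (\<lambda>k. exp (- 0 * real_of_int \<bar>0 - k\<bar> - 0 * real_of_int \<bar>k - 0\<bar>)
                        / (jbr (0 - k) powr \<alpha> * jbr (k - 0) powr \<alpha>)) (UNIV::int set)"
      by (rule infsum_nonneg) simp
    also have "\<dots> \<le> c * exp (- 0 * real_of_int \<bar>0 - 0\<bar>) / jbr (0 - 0) powr \<alpha>"
      using ch by blast
    finally show ?thesis by (simp add: jbr_def)
  qed
  have weak1: "norm (Gmat v j m) \<le> (3 * cv) * exp (- \<beta> * real_of_int \<bar>j - m\<bar>) / (jbr j * jbr (j - m) powr \<alpha>)" for j m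
  proof -
    have "norm (Gmat v j m) \<le> 3 * cv * exp (- \<beta> * real_of_int \<bar>j - m\<bar>) / ((jbr j + jbr m) * jbr (j - m) powr \<alpha>)"
      using G1 by blast
    also have "\<dots> \<le> (3 * cv) * exp (- \<beta> * real_of_int \<bar>j - m\<bar>) / (jbr j * jbr (j - m) powr \<alpha>)"
      using cv jbr_pos[of m] jbr_pos[of j] jbr_pos[of "j-m"]
      by (intro divide_left_mono mult_right_mono mult_pos_pos) auto
    finally show ?thesis .
  qed
  show "\<forall>n\<ge>2. \<forall>j k. norm (Gpow (Gmat v) n j k)
            \<le> (3 * cv) ^ n * c ^ (n - 1) * exp (- \<beta> * real_of_int \<bar>j - k\<bar>)
               / (jbr j * jbr k * jbr (j - k) powr \<alpha>)"
  proof (rule allI, rule impI)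
    fix n :: nat assume "n \<ge> 2"
    thus "\<forall>j k. norm (Gpow (Gmat v) n j k)
            \<le> (3 * cv) ^ n * c ^ (n - 1) * exp (- \<beta> * real_of_int \<bar>j - k\<bar>)
               / (jbr j * jbr k * jbr (j - k) powr \<alpha>)"
    proof (induction n rule: dec_induct)
      case base
      show ?case
      proof (intro allI)
        fix j k
        have "Gpow (Gmat v) 2 j k = infsum (\<lambda>m. Gmat v j m * Gmat v m k) UNIV"
          by (simp only: numeral_2_eq_2 Gpow.simps(2)[of _ "Suc 0"] Gpow1)
        also have "norm \<dots> \<le> (3 * cv) * (3 * cv) * c * exp (- \<beta> * real_of_int \<bar>j - k\<bar>) / (jbr j * jbr k * jbr (j - k) powr \<alpha>)"
          by (rule step_lemma[OF al _ vb ch b0 weak1]) (use cv in simp)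
        finally show "norm (Gpow (Gmat v) 2 j k) \<le> (3 * cv) ^ 2 * c ^ (2 - 1) * exp (- \<beta> * real_of_int \<bar>j - k\<bar>)
               / (jbr j * jbr k * jbr (j - k) powr \<alpha>)"
          by (simp add: power2_eq_square)
      qed
    next
      case (step n)
      let ?K = "(3 * cv) ^ n * c ^ (n - 1)"
      have K0: "?K \<ge> 0" using cv c0 by simp
      have wk: "norm (Gpow (Gmat v) n j m) \<le> ?K * exp (- \<beta> * real_of_int \<bar>j - m\<bar>) / (jbr j * jbr (j - m) powr \<alpha>)" for j m
      proof -
        have "norm (Gpow (Gmat v) n j m) \<le> ?K * exp (- \<beta> * real_of_int \<bar>j - m\<bar>) / (jbr j * jbr m * jbr (j - m) powr \<alpha>)"
          using step.IH by blast
        also have "\<dots> \<le> ?K * exp (- \<beta> * real_of_int \<bar>j - m\<bar>) / (jbr j * jbr (j - m) powr \<alpha>)"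
          using K0 jbr_ge1[of m] jbr_pos[of j] jbr_pos[of "j-m"]
          by (intro divide_left_mono) (auto simp: mult_le_cancel_left1)
        finally show ?thesis .
      qed
      show ?case
      proof (intro allI)
        fix j k
        have eq: "?K * (3 * cv) * c = (3 * cv) ^ Suc n * c ^ (Suc n - 1)"
          using step.hyps by (cases n) (auto simp: algebra_simps)
        have "norm (Gpow (Gmat v) (Suc n) j k) \<le> ?K * (3 * cv) * c * exp (- \<beta> * real_of_int \<bar>j - k\<bar>) / (jbr j * jbr k * jbr (j - k) powr \<alpha>)"
          unfolding Gpow.simps(2) by (rule step_lemma[OF al K0 vb ch b0 wk])
        thus "norm (Gpow (Gmat v) (Suc n) j k) \<le> (3 * cv) ^ Suc n * c ^ (Suc n - 1) * exp (- \<beta> * real_of_int \<bar>j - k\<bar>) / (jbr j * jbr k * jbr (j - k) powr \<alpha>)"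
          by (simp only: eq)
      qed
    qed
  qed
qed

end
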